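(* Let $X$ be the class of continuous functions $f:[0,1]\to\mathbb{R}$ with $f(0),f(1)\in\mathbb{Z}$. Then each of the two families of operators $\widetilde{B}_n$, $n\in\mathbb{N}_+$, and $\widehat{B}_n$, $n\in\mathbb{N}_+$, uniformly asymptotically preserves convexity on $X$.
   Context: For $n\in\mathbb{N}_+$ and $f:[0,1]\to\mathbb{R}$, define $\widetilde{B}_n(f)(x):=\sum_{k=0}^n \left[f\left(\frac{k}{n}\right)\binom{n}{k}\right]x^k(1-x)^{n-k}$, where $[\alpha]$ is the largest integer $\le\alpha$, and $\widehat{B}_n(f)(x):=\sum_{k=0}^n \left\langle f\left(\frac{k}{n}\right)\binom{n}{k}\right\rangle x^k(1-x)^{n-k}$, where $\langle\alpha\rangle$ is the integer nearest to $\alpha$ (when $\alpha$ is a half-integer, $\langle\alpha\rangle$ may be either of the two neighbouring integers, chosen arbitrarily; the result holds for any such choice). Definition: a family of operators $L_n:X\to X$, $n\in\mathbb{N}_+$, on a class $X$ of functions defined on $I\subseteq\mathbb{R}$ uniformly asymptotically preserves convexity on $X$ if there exist $n_0\in\mathbb{N}_+$ and functions $\varepsilon_n,\eta_n:I\to\mathbb{R}$, $n\ge n_0$, such that: (i) $\varepsilon_n\to 0$ and $\eta_n\to 0$ uniformly on $I$ as $n\to\infty$; (ii) whenever $f\in X$ is convex on $I$, $L_n(f)+\varepsilon_n$ is convex on $I$ for all $n\ge n_0$; (iii) whenever $f\in X$ is concave on $I$, $L_n(f)+\eta_n$ is concave on $I$ for all $n\ge n_0$. *)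

theory Defs
  imports "HOL-Analysis.Analysis"
begin

definition Btilde :: "nat \<Rightarrow> (real \<Rightarrow> real) \<Rightarrow> real \<Rightarrow> real" where
  "Btilde n f x = (\<Sum>k\<le>n. real_of_int \<lfloor>f (real k / real n) * real (n choose k)\<rfloor>
                              * x ^ k * (1 - x) ^ (n - k))"

text \<open>A nearest-integer choice: rnd n k a is an integer nearest to a
  (at half-integers either neighbour may be chosen, possibly depending on n and k).\<close>
definition nearest_int_choice :: "(nat \<Rightarrow> nat \<Rightarrow> real \<Rightarrow> int) \<Rightarrow> bool" where
  "nearest_int_choice rnd \<longleftrightarrow>
     (\<forall>n k a. \<forall>m::int. \<bar>a - real_of_int (rnd n k a)\<bar> \<le> \<bar>a - real_of_int m\<bar>)"

definition Bhat :: "(nat \<Rightarrow> nat \<Rightarrow> real \<Rightarrow> int) \<Rightarrow> nat \<Rightarrow> (real \<Rightarrow> real) \<Rightarrow> real \<Rightarrow> real" where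
  "Bhat rnd n f x = (\<Sum>k\<le>n. real_of_int (rnd n k (f (real k / real n) * real (n choose k)))
                              * x ^ k * (1 - x) ^ (n - k))"

definition classX :: "(real \<Rightarrow> real) set" where
  "classX = {f. continuous_on {0..1} f \<and> f 0 \<in> \<int> \<and> f 1 \<in> \<int>}"

definition unif_asympt_pres_convexity ::
  "(nat \<Rightarrow> (real \<Rightarrow> real) \<Rightarrow> real \<Rightarrow> real) \<Rightarrow> (real \<Rightarrow> real) set \<Rightarrow> real set \<Rightarrow> bool" where
  "unif_asympt_pres_convexity L X I \<longleftrightarrow>
     (\<forall>n\<ge>1. \<forall>f\<in>X. L n f \<in> X) \<and>
     (\<exists>n0::nat. n0 \<ge> 1 \<and> (\<exists>\<epsilon> \<eta> :: nat \<Rightarrow> real \<Rightarrow> real.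
        uniform_limit I \<epsilon> (\<lambda>_. 0) sequentially \<and>
        uniform_limit I \<eta> (\<lambda>_. 0) sequentially \<and>
        (\<forall>f\<in>X. convex_on I f \<longrightarrow> (\<forall>n\<ge>n0. convex_on I (\<lambda>x. L n f x + \<epsilon> n x))) \<and>
        (\<forall>f\<in>X. concave_on I f \<longrightarrow> (\<forall>n\<ge>n0. concave_on I (\<lambda>x. L n f x + \<eta> n x)))))"

end

theory Submission imports Defs begin

definition bp :: "nat \<Rightarrow> nat \<Rightarrow> real \<Rightarrow> real" where
  "bp n k x = real (n choose k) * x ^ k * (1 - x) ^ (n - k)"

definition Bern :: "nat \<Rightarrow> (nat \<Rightarrow> real) \<Rightarrow> real \<Rightarrow> real" where
  "Bern n b x = (\<Sum>k\<le>n. b k * bp n k x)"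

lemma bp_nonneg: "0 \<le> x \<Longrightarrow> x \<le> 1 \<Longrightarrow> 0 \<le> bp n k x"
  by (simp add: bp_def)

lemma bp_sum: "(\<Sum>k\<le>n. bp n k x) = 1"
  using binomial_ring[of x "1 - x" n] by (simp add: bp_def)

lemma bp_deriv:
  "(bp (Suc m) k has_real_derivative
     real (Suc m) * ((if k = 0 then 0 else bp m (k - 1) x) - bp m k x)) (at x)"
proof (cases k)
  case 0
  show ?thesis unfolding 0 bp_def
    apply (auto intro!: derivative_eq_intros)
    apply (cases m) apply (auto simp: algebra_simps)
    done
next
  case (Suc j)
  have e1: "real (Suc m choose Suc j) * real (Suc j) = real (Suc m) * real (m choose j)"
    by (metis Suc_times_binomial_eq of_nat_mult)
  have e2: "real (Suc m choose Suc j) * real (m - j) = real (Suc m) * real (m choose Suc j)"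
    using binomial_absorb_comp[of "Suc m" "Suc j"]
    by (metis diff_Suc_1 diff_Suc_Suc mult.commute of_nat_mult)
  have "(bp (Suc m) (Suc j) has_real_derivative
      real (Suc m choose Suc j) * (real (Suc j) * x ^ j * (1 - x) ^ (m - j)
        - x ^ Suc j * (real (m - j) * (1 - x) ^ (m - j - 1)))) (at x)"
    unfolding bp_def
    apply (rule derivative_eq_intros refl)+
    apply (cases j; cases "m - j"; simp add: algebra_simps)
    done
  moreover have "real (Suc m choose Suc j) * (real (Suc j) * x ^ j * (1 - x) ^ (m - j)
        - x ^ Suc j * (real (m - j) * (1 - x) ^ (m - j - 1)))
      = real (Suc m) * (bp m j x - bp m (Suc j) x)"
  proof -
    have "real (Suc m choose Suc j) * (real (Suc j) * x ^ j * (1 - x) ^ (m - j))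
        = real (Suc m) * bp m j x"
    proof -
      have "real (Suc m choose Suc j) * (real (Suc j) * x ^ j * (1 - x) ^ (m - j))
         = (real (Suc m choose Suc j) * real (Suc j)) * (x ^ j * (1 - x) ^ (m - j))"
        by (simp only: mult_ac)
      also have "\<dots> = (real (Suc m) * real (m choose j)) * (x ^ j * (1 - x) ^ (m - j))"
        by (simp only: e1)
      finally show ?thesis by (simp only: bp_def mult_ac)
    qed
    moreover have "real (Suc m choose Suc j) * (x ^ Suc j * (real (m - j) * (1 - x) ^ (m - j - 1)))
        = real (Suc m) * bp m (Suc j) x"
    proof -
      have "real (Suc m choose Suc j) * (x ^ Suc j * (real (m - j) * (1 - x) ^ (m - j - 1)))
         = (real (Suc m choose Suc j) * real (m - j)) * (x ^ Suc j * (1 - x) ^ (m - Suc j))"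
        by (simp only: mult_ac diff_Suc_eq_diff_pred diff_commute)
      also have "\<dots> = (real (Suc m) * real (m choose Suc j)) * (x ^ Suc j * (1 - x) ^ (m - Suc j))"
        by (simp only: e2)
      finally show ?thesis by (simp only: bp_def mult_ac)
    qed
    ultimately show ?thesis by (simp add: algebra_simps)
  qed
  ultimately show ?thesis using Suc by simp
qed

lemma Bern_deriv:
  "(Bern (Suc m) b has_real_derivative
     real (Suc m) * Bern m (\<lambda>k. b (Suc k) - b k) x) (at x)"
proof -
  have D: "(Bern (Suc m) b has_real_derivative
     (\<Sum>k\<le>Suc m. b k * (real (Suc m) * ((if k = 0 then 0 else bp m (k - 1) x) - bp m k x)))) (at x)"
    unfolding Bern_def[abs_def]
    by (intro DERIV_sum DERIV_cmult bp_deriv)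
  have E1: "(\<Sum>k\<le>Suc m. b k * (real (Suc m) * ((if k = 0 then 0 else bp m (k - 1) x) - bp m k x)))
      = real (Suc m) * ((\<Sum>k\<le>Suc m. b k * (if k = 0 then 0 else bp m (k - 1) x))
                      - (\<Sum>k\<le>Suc m. b k * bp m k x))"
    by (simp add: sum_distrib_left sum_subtractf algebra_simps)
  have E2: "(\<Sum>k\<le>Suc m. b k * (if k = 0 then 0 else bp m (k - 1) x))
      = (\<Sum>k\<le>m. b (Suc k) * bp m k x)"
    by (subst sum.atMost_Suc_shift) simp
  have E3: "(\<Sum>k\<le>Suc m. b k * bp m k x) = (\<Sum>k\<le>m. b k * bp m k x)"
    by (simp add: bp_def)
  have E4: "Bern m (\<lambda>k. b (Suc k) - b k) x = (\<Sum>k\<le>m. b (Suc k) * bp m k x) - (\<Sum>k\<le>m. b k * bp m k x)"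
    by (simp add: Bern_def sum_subtractf left_diff_distrib)
  show ?thesis using D unfolding E1 E2 E3 E4[symmetric] .
qed

lemma Bern_convex:
  assumes "\<And>k. k + 2 \<le> n \<Longrightarrow> b k - 2 * b (k + 1) + b (k + 2) \<ge> 0"
  shows "convex_on {0..1} (Bern n b)"
proof (cases "n \<ge> 2")
  case True
  then obtain m where n: "n = Suc (Suc m)" by (metis add_2_eq_Suc le_Suc_ex)
  let ?d = "\<lambda>k. b (Suc k) - b k"
  let ?dd = "\<lambda>k. ?d (Suc k) - ?d k"
  show ?thesis unfolding n
  proof (rule f''_ge0_imp_convex)
    show "convex {0..1::real}" by simp
    fix x :: real
    show "(Bern (Suc (Suc m)) b has_real_derivative (\<lambda>x. real (Suc (Suc m)) * Bern (Suc m) ?d x) x) (at x)"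
      by (rule Bern_deriv)
    show "((\<lambda>x. real (Suc (Suc m)) * Bern (Suc m) ?d x) has_real_derivative
       (\<lambda>x. real (Suc (Suc m)) * (real (Suc m) * Bern m ?dd x)) x) (at x)"
      by (intro DERIV_cmult Bern_deriv)
    assume x: "x \<in> {0..1}"
    have "0 \<le> Bern m ?dd x"
      unfolding Bern_def
    proof (intro sum_nonneg mult_nonneg_nonneg)
      fix k assume "k \<in> {..m}"
      then have "k + 2 \<le> n" using n by simp
      from assms[OF this] show "0 \<le> ?dd k" by (simp add: numeral_2_eq_2)
      show "0 \<le> bp m k x" using x by (simp add: bp_nonneg)
    qed
    then show "0 \<le> (\<lambda>x. real (Suc (Suc m)) * (real (Suc m) * Bern m ?dd x)) x" by simp
  qed
next
  case False
  then have "n = 0 \<or> n = 1" by auto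
  then show ?thesis
  proof
    assume "n = 0"
    have "Bern n b = (\<lambda>x. b 0)" by (auto simp: \<open>n = 0\<close> Bern_def bp_def)
    then show ?thesis by (simp add: convex_on_const)
  next
    assume n1: "n = 1"
    have "Bern n b = (\<lambda>x. (b 1 - b 0) * x + b 0)"
      by (auto simp: n1 Bern_def bp_def algebra_simps)
    then show ?thesis
      by (auto intro!: convex_on_linorderI simp: algebra_simps)
  qed
qed

definition FF :: "nat \<Rightarrow> nat \<Rightarrow> real" where
  "FF n j = (2 / real n) * ((1/2) ^ j + (1/2) ^ (n - j)) + 12 / real n ^ 3"

definition dd :: "nat \<Rightarrow> nat \<Rightarrow> real" where
  "dd n k = (18 / real n) * ((1/2) ^ k + (1/2) ^ (n - k)) + 24 / real n ^ 3 * real k * (real k - real n)"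

lemma FF_nonneg: "0 \<le> FF n j"
  by (simp add: FF_def)

lemma dd_diff:
  assumes "k + 2 \<le> n"
  shows "dd n k - 2 * dd n (k + 1) + dd n (k + 2) = FF n k + 2 * FF n (k + 1) + FF n (k + 2)"
proof -
  obtain m where n: "n = k + 2 + m" using assms le_Suc_ex by blast
  have a: "n - k = m + 2" "n - (k + 1) = m + 1" "n - (k + 2) = m" using n by auto
  define A where "A = 1 / real n"
  define C where "C = 1 / real n ^ 3"
  define h where "h = (1/2::real) ^ k"
  define g where "g = (1/2::real) ^ m"
  define K where "K = real k"
  define N where "N = real n"
  have N: "N = K + 2 + real m" using n by (simp add: N_def K_def)
  have d0: "dd n k = 18 * A * (h + g * (1/4)) + 24 * C * K * (K - N)"
    unfolding dd_def a A_def C_def h_def g_def K_def N_def by (simp add: power_add)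
  have d1: "dd n (k + 1) = 18 * A * (h * (1/2) + g * (1/2)) + 24 * C * (K + 1) * (K + 1 - N)"
    unfolding dd_def a A_def C_def h_def g_def K_def N_def by (simp add: power_add algebra_simps)
  have d2: "dd n (k + 2) = 18 * A * (h * (1/4) + g) + 24 * C * (K + 2) * (K + 2 - N)"
    unfolding dd_def a A_def C_def h_def g_def K_def N_def by (simp add: power_add algebra_simps)
  have f0: "FF n k = 2 * A * (h + g * (1/4)) + 12 * C"
    unfolding FF_def a A_def C_def h_def g_def by (simp add: power_add)
  have f1: "FF n (k + 1) = 2 * A * (h * (1/2) + g * (1/2)) + 12 * C"
    unfolding FF_def a A_def C_def h_def g_def by (simp add: power_add)
  have f2: "FF n (k + 2) = 2 * A * (h * (1/4) + g) + 12 * C"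
    unfolding FF_def a A_def C_def h_def g_def by (simp add: power_add)
  show ?thesis unfolding d0 d1 d2 f0 f1 f2 N by (simp add: algebra_simps)
qed

lemma dd_bound:
  assumes "k \<le> n" "n \<ge> 1"
  shows "\<bar>dd n k\<bar> \<le> 60 / real n"
proof -
  have p: "(1/2::real) ^ k \<le> 1" "(1/2::real) ^ (n - k) \<le> 1"
    by (simp_all add: power_le_one)
  have "\<bar>(18 / real n) * ((1/2) ^ k + (1/2) ^ (n - k))\<bar> = (18 / real n) * ((1/2) ^ k + (1/2) ^ (n - k))"
    by simp
  also have "\<dots> \<le> (18 / real n) * 2" using p by (intro mult_left_mono) auto
  finally have "\<bar>(18 / real n) * ((1/2) ^ k + (1/2) ^ (n - k))\<bar> \<le> 36 / real n" by simp
  moreover have "\<bar>real k * (real k - real n)\<bar> \<le> real n ^ 2"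
  proof -
    have "\<bar>real k * (real k - real n)\<bar> = real k * (real n - real k)" using assms by (simp add: abs_mult)
    also have "\<dots> \<le> real n * real n" using assms by (intro mult_mono) auto
    finally show ?thesis by (simp add: power2_eq_square)
  qed
  then have "\<bar>24 / real n ^ 3 * real k * (real k - real n)\<bar> \<le> 24 / real n"
    using assms by (simp add: abs_mult divide_simps power3_eq_cube power2_eq_square mult.assoc)
  ultimately show ?thesis unfolding dd_def by linarith
qed

lemma choose3: "real ((m + 3) choose 3) * 6 = real (m + 3) * real (m + 2) * real (m + 1)"
proof -
  have a: "(m + 3) * ((m + 2) choose 2) = ((m + 3) choose 3) * 3"
    using Suc_times_binomial_eq[of "m + 2" 2] by (simp add: numeral_eq_Suc)
  have b: "(m + 2) * ((m + 1) choose 1) = ((m + 2) choose 2) * 2"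
    using Suc_times_binomial_eq[of "m + 1" 1] by (simp add: numeral_eq_Suc)
  have "((m + 3) choose 3) * 6 = (m + 3) * (m + 2) * (m + 1)"
  proof -
    have "((m + 3) choose 3) * 6 = ((m + 3) choose 3) * 3 * 2" by simp
    also have "\<dots> = (m + 3) * (((m + 2) choose 2) * 2)" using a by (metis mult.assoc)
    also have "\<dots> = (m + 3) * ((m + 2) * (m + 1))"
    proof -
      have b': "(m + 2) * (m + 1) = ((m + 2) choose 2) * 2" using b by simp
      show ?thesis by (simp only: b')
    qed
    finally show ?thesis by (simp only: mult.assoc)
  qed
  then have "real (((m + 3) choose 3) * 6) = real ((m + 3) * (m + 2) * (m + 1))" by (simp only:)
  then show ?thesis by (simp only: of_nat_mult of_nat_numeral)
qed

lemma inv_choose_le_FF_half: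
  assumes "n \<ge> 6" "1 \<le> j" "2 * j \<le> n"
  shows "1 / real (n choose j) \<le> FF n j"
proof -
  have n0: "real n > 0" using assms by simp
  have t: "0 \<le> (2 / real n) * (1/2) ^ (n - j)" "0 \<le> 12 / real n ^ 3" by simp_all
  consider "j = 1" | "j = 2" | "j \<ge> 3" using assms by linarith
  then show ?thesis
  proof cases
    case 1
    have "1 / real (n choose j) = (2 / real n) * (1/2) ^ j" using n0 by (simp add: 1)
    then show ?thesis unfolding FF_def using t by (simp add: algebra_simps)
  next
    case 2
    have c2: "real (n choose 2) * 2 = real n * (real n - 1)"
    proof -
      define m where "m = n - 1"
      have m: "n = m + 1" using assms by (simp add: m_def)
      have "n * ((n - 1) choose 1) = (n choose 2) * 2"
        using Suc_times_binomial_eq[of "m" 1] m by (simp add: numeral_eq_Suc)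
      then have "n * m = (n choose 2) * 2" using m by simp
      then have "real n * real m = real (n choose 2) * 2" by (metis of_nat_mult of_nat_numeral)
      then show ?thesis using m by simp
    qed
    have c2': "real (n choose 2) = real n * (real n - 1) / 2" using c2 by simp
    have "1 / real (n choose 2) = 2 / (real n * (real n - 1))"
      unfolding c2' divide_divide_eq_right by simp
    also have "\<dots> \<le> (2 / real n) * (1/2) ^ 2"
      using assms by (simp add: field_simps)
    finally have "1 / real (n choose j) \<le> (2 / real n) * (1/2) ^ j" using 2 by simp
    moreover have "FF n j = (2 / real n) * (1/2) ^ j + (2 / real n) * (1/2) ^ (n - j) + 12 / real n ^ 3"
      unfolding FF_def by (simp add: distrib_left)
    ultimately show ?thesis using t by linarith
  next
    case 3
    have "n choose 3 \<le> n choose j" using assms 3 by (intro binomial_mono) auto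
    define m where "m = n - 3"
    have m: "n = m + 3" using assms by (simp add: m_def)
    have c3: "real (n choose 3) * 6 = real n * (real n - 1) * (real n - 2)"
      using choose3[of m] m by simp
    have pos3: "real (n choose 3) > 0" using assms by simp
    have "1 / real (n choose j) \<le> 1 / real (n choose 3)"
    proof -
      have posj: "real (n choose j) > 0" using assms by simp
      show ?thesis using \<open>n choose 3 \<le> n choose j\<close> pos3 posj
        by (intro divide_left_mono) (auto intro: mult_pos_pos)
    qed
    also have "\<dots> = 6 / (real n * (real n - 1) * (real n - 2))"
    proof -
      have c3': "real (n choose 3) = real n * (real n - 1) * (real n - 2) / 6" using c3 by simp
      show ?thesis unfolding c3' divide_divide_eq_right by simp
    qed
    also have "\<dots> \<le> 12 / real n ^ 3"
    proof -
      have "0 \<le> real n * (real n - 6)" using assms by simp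
      then have "real n ^ 2 \<le> 2 * ((real n - 1) * (real n - 2))"
        by (simp add: power2_eq_square algebra_simps)
      then have "real n * real n ^ 2 \<le> real n * (2 * ((real n - 1) * (real n - 2)))"
        using n0 by (intro mult_left_mono) auto
      then have "6 * real n ^ 3 \<le> 12 * (real n * (real n - 1) * (real n - 2))"
        by (simp add: power3_eq_cube power2_eq_square algebra_simps)
      moreover have "real n * (real n - 1) * (real n - 2) > 0" using assms by simp
      ultimately show ?thesis using n0 by (simp add: divide_simps)
    qed
    finally have "1 / real (n choose j) \<le> 12 / real n ^ 3" .
    moreover have "0 \<le> (2 / real n) * ((1/2) ^ j + (1/2) ^ (n - j))" by simp
    ultimately show ?thesis unfolding FF_def by linarith
  qed
qed

lemma inv_choose_le_FF:
  assumes "n \<ge> 6" "1 \<le> j" "j \<le> n - 1"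
  shows "1 / real (n choose j) \<le> FF n j"
proof (cases "2 * j \<le> n")
  case True
  then show ?thesis using inv_choose_le_FF_half assms by blast
next
  case False
  have "1 / real (n choose (n - j)) \<le> FF n (n - j)"
    using False assms by (intro inv_choose_le_FF_half) auto
  moreover have "n choose (n - j) = n choose j" using assms by (simp add: binomial_symmetric[symmetric])
  moreover have "FF n (n - j) = FF n j" using assms by (simp add: FF_def)
  ultimately show ?thesis by simp
qed

lemma Bern_add: "Bern n b x + Bern n c x = Bern n (\<lambda>k. b k + c k) x"
  by (simp add: Bern_def sum.distrib distrib_right)

lemma Bern_minus_diff: "- (Bern n b x + - Bern n c x) = Bern n (\<lambda>k. c k - b k) x"
  by (simp add: Bern_def sum_subtractf left_diff_distrib)

lemma Bern_bound:
  assumes "x \<in> {0..1}" "\<And>k. k \<le> n \<Longrightarrow> \<bar>b k\<bar> \<le> M"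
  shows "\<bar>Bern n b x\<bar> \<le> M"
proof -
  have "\<bar>Bern n b x\<bar> \<le> (\<Sum>k\<le>n. \<bar>b k * bp n k x\<bar>)"
    unfolding Bern_def by (rule sum_abs)
  also have "\<dots> \<le> (\<Sum>k\<le>n. M * bp n k x)"
  proof (rule sum_mono)
    fix k assume "k \<in> {..n}"
    then have "\<bar>b k\<bar> \<le> M" using assms by simp
    moreover have "0 \<le> bp n k x" using assms by (simp add: bp_nonneg)
    ultimately show "\<bar>b k * bp n k x\<bar> \<le> M * bp n k x"
      by (simp add: abs_mult mult_right_mono)
  qed
  also have "\<dots> = M" by (simp add: sum_distrib_left[symmetric] bp_sum)
  finally show ?thesis .
qed

lemma mid_point:
  assumes "k + 2 \<le> n"
  shows "(1 - 1/2) *\<^sub>R (real k / real n) + (1/2) *\<^sub>R (real (k + 2) / real n) = real (k + 1) / real n"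
proof -
  have "real n > 0" using assms by simp
  then show ?thesis by (simp add: field_simps)
qed

lemma pts_in: "k \<le> n \<Longrightarrow> real k / real n \<in> {0..1}"
  by (auto simp: divide_simps)

lemma lin_aux1:
  fixes f0 f1 f2 b0 b1 b2 F0 F1 F2 d0 d1 d2 :: real
  shows "\<bar>f0 - b0\<bar> \<le> F0 \<Longrightarrow> \<bar>f1 - b1\<bar> \<le> F1 \<Longrightarrow> \<bar>f2 - b2\<bar> \<le> F2
    \<Longrightarrow> d0 - 2 * d1 + d2 = F0 + 2 * F1 + F2 \<Longrightarrow> f1 \<le> 1/2 * f0 + 1/2 * f2
    \<Longrightarrow> 0 \<le> b0 + d0 - 2 * (b1 + d1) + (b2 + d2)"
  by (simp add: abs_le_iff)

lemma lin_aux2: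
  fixes f0 f1 f2 b0 b1 b2 F0 F1 F2 d0 d1 d2 :: real
  shows "\<bar>f0 - b0\<bar> \<le> F0 \<Longrightarrow> \<bar>f1 - b1\<bar> \<le> F1 \<Longrightarrow> \<bar>f2 - b2\<bar> \<le> F2
    \<Longrightarrow> d0 - 2 * d1 + d2 = F0 + 2 * F1 + F2 \<Longrightarrow> f1 \<ge> 1/2 * f0 + 1/2 * f2
    \<Longrightarrow> 0 \<le> d0 - b0 - 2 * (d1 - b1) + (d2 - b2)"
  by (simp add: abs_le_iff)

lemma main_convex:
  assumes n: "n \<ge> 6" and cf: "convex_on {0..1} f"
    and e: "\<And>k. k \<le> n \<Longrightarrow> \<bar>f (real k / real n) - b k\<bar> \<le> FF n k"
  shows "convex_on {0..1} (\<lambda>x. Bern n b x + Bern n (dd n) x)"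
proof -
  have "convex_on {0..1} (Bern n (\<lambda>k. b k + dd n k))"
  proof (rule Bern_convex)
    fix k assume k: "k + 2 \<le> n"
    have "f ((1 - 1/2) *\<^sub>R (real k / real n) + (1/2) *\<^sub>R (real (k + 2) / real n))
        \<le> (1 - 1/2) * f (real k / real n) + (1/2) * f (real (k + 2) / real n)"
      using k by (intro convex_onD[OF cf] pts_in) auto
    then have c: "f (real (k + 1) / real n) \<le> (1/2) * f (real k / real n) + (1/2) * f (real (k + 2) / real n)"
      unfolding mid_point[OF k] by simp
    have a0: "\<bar>f (real k / real n) - b k\<bar> \<le> FF n k" by (rule e) (use k in simp)
    have a1: "\<bar>f (real (k+1) / real n) - b (k+1)\<bar> \<le> FF n (k+1)" by (rule e) (use k in simp)
    have a2: "\<bar>f (real (k+2) / real n) - b (k+2)\<bar> \<le> FF n (k+2)" by (rule e) (use k in simp)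
    show "0 \<le> b k + dd n k - 2 * (b (k + 1) + dd n (k + 1)) + (b (k + 2) + dd n (k + 2))"
      by (rule lin_aux1[OF a0 a1 a2 dd_diff[OF k] c])
  qed
  then show ?thesis by (simp add: Bern_add)
qed

lemma main_concave:
  assumes n: "n \<ge> 6" and cf: "concave_on {0..1} f"
    and e: "\<And>k. k \<le> n \<Longrightarrow> \<bar>f (real k / real n) - b k\<bar> \<le> FF n k"
  shows "concave_on {0..1} (\<lambda>x. Bern n b x + - Bern n (dd n) x)"
proof -
  have "convex_on {0..1} (Bern n (\<lambda>k. dd n k - b k))"
  proof (rule Bern_convex)
    fix k assume k: "k + 2 \<le> n"
    have "f ((1 - 1/2) *\<^sub>R (real k / real n) + (1/2) *\<^sub>R (real (k + 2) / real n))
        \<ge> (1 - 1/2) * f (real k / real n) + (1/2) * f (real (k + 2) / real n)"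
      using k by (intro concave_onD[OF cf] pts_in) auto
    then have c: "f (real (k + 1) / real n) \<ge> (1/2) * f (real k / real n) + (1/2) * f (real (k + 2) / real n)"
      unfolding mid_point[OF k] by simp
    have a0: "\<bar>f (real k / real n) - b k\<bar> \<le> FF n k" by (rule e) (use k in simp)
    have a1: "\<bar>f (real (k+1) / real n) - b (k+1)\<bar> \<le> FF n (k+1)" by (rule e) (use k in simp)
    have a2: "\<bar>f (real (k+2) / real n) - b (k+2)\<bar> \<le> FF n (k+2)" by (rule e) (use k in simp)
    show "0 \<le> dd n k - b k - 2 * (dd n (k + 1) - b (k + 1)) + (dd n (k + 2) - b (k + 2))"
      by (rule lin_aux2[OF a0 a1 a2 dd_diff[OF k] c])
  qed
  then show ?thesis unfolding concave_on_def Bern_minus_diff .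
qed

lemma coeff_ok:
  fixes c :: "nat \<Rightarrow> int"
  assumes n: "n \<ge> 6"
    and c1: "\<And>k. k \<le> n \<Longrightarrow> \<bar>f (real k / real n) * real (n choose k) - real_of_int (c k)\<bar> \<le> 1"
    and c0: "real_of_int (c 0) = f 0" and cn: "real_of_int (c n) = f 1"
    and k: "k \<le> n"
  shows "\<bar>f (real k / real n) - real_of_int (c k) / real (n choose k)\<bar> \<le> FF n k"
proof -
  consider "k = 0" | "k = n" | "1 \<le> k \<and> k \<le> n - 1" using k by linarith
  then show ?thesis
  proof cases
    case 1 then show ?thesis using c0 FF_nonneg by simp
  next
    case 2 then show ?thesis using cn FF_nonneg n by simp
  next
    case 3
    have C: "real (n choose k) > 0" using k by simp
    have "\<bar>f (real k / real n) - real_of_int (c k) / real (n choose k)\<bar>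
        = \<bar>f (real k / real n) * real (n choose k) - real_of_int (c k)\<bar> / real (n choose k)"
      using C by (simp add: field_simps)
    also have "\<dots> \<le> 1 / real (n choose k)" using c1[OF k] C by (simp add: divide_right_mono)
    also have "\<dots> \<le> FF n k" using inv_choose_le_FF n 3 by blast
    finally show ?thesis .
  qed
qed

lemma int_sum_Bern:
  fixes c :: "nat \<Rightarrow> int"
  shows "(\<Sum>k\<le>n. real_of_int (c k) * x ^ k * (1 - x) ^ (n - k))
       = Bern n (\<lambda>k. real_of_int (c k) / real (n choose k)) x"
  unfolding Bern_def bp_def by (intro sum.cong refl) (simp add: field_simps)

lemma int_sum_X:
  fixes c :: "nat \<Rightarrow> int"
  assumes n: "n \<ge> 1" and c0: "real_of_int (c 0) = f 0" and cn: "real_of_int (c n) = f 1"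
    and X: "f \<in> classX"
  shows "(\<lambda>x. \<Sum>k\<le>n. real_of_int (c k) * x ^ k * (1 - x) ^ (n - k)) \<in> classX"
proof -
  have f0: "f 0 \<in> \<int>" and f1: "f 1 \<in> \<int>" using X by (auto simp: classX_def)
  have "(\<Sum>k\<le>n. real_of_int (c k) * 0 ^ k * (1 - 0) ^ (n - k)) = (\<Sum>k\<le>n. if k = 0 then real_of_int (c k) else 0)"
    by (intro sum.cong refl) (auto simp: power_0_left)
  then have "(\<Sum>k\<le>n. real_of_int (c k) * 0 ^ k * (1 - 0) ^ (n - k)) = real_of_int (c 0)"
    by simp
  moreover have "(\<Sum>k\<le>n. real_of_int (c k) * 1 ^ k * (1 - 1) ^ (n - k)) = real_of_int (c n)"
  proof -
    have "(\<Sum>k\<le>n. real_of_int (c k) * 1 ^ k * (1 - 1) ^ (n - k)) = (\<Sum>k\<le>n. if k = n then real_of_int (c k) else 0)"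
      by (intro sum.cong refl) (auto simp: power_0_left)
    then show ?thesis by simp
  qed
  ultimately show ?thesis using f0 f1 c0 cn
    unfolding classX_def by (auto intro!: continuous_intros)
qed

lemma eps_unif: "uniform_limit {0..1} (\<lambda>n x. Bern n (dd n) x) (\<lambda>_. 0) sequentially"
  unfolding uniform_limit_iff
proof (intro allI impI)
  fix e :: real assume e: "0 < e"
  obtain N :: nat where N: "60 / e < real N" using reals_Archimedean2 by blast
  show "\<forall>\<^sub>F n in sequentially. \<forall>x\<in>{0..1}. dist (Bern n (dd n) x) 0 < e"
    unfolding eventually_sequentially
  proof (intro exI allI impI ballI)
    fix n x assume n: "Suc N \<le> n" and x: "x \<in> {0..(1::real)}"
    have "\<bar>Bern n (dd n) x\<bar> \<le> 60 / real n"
      using n by (intro Bern_bound x dd_bound) auto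
    also have "\<dots> < e"
    proof -
      have "60 / e < real n" using N n by simp
      then have "60 < e * real n" using e by (simp add: divide_less_eq mult.commute)
      then show ?thesis using n e by (simp add: divide_less_eq mult.commute)
    qed
    finally show "dist (Bern n (dd n) x) 0 < e" by simp
  qed
qed

lemma eta_unif: "uniform_limit {0..1} (\<lambda>n x. - Bern n (dd n) x) (\<lambda>_. 0) sequentially"
  using eps_unif unfolding uniform_limit_iff by (simp add: dist_real_def)

lemma generic:
  fixes L :: "nat \<Rightarrow> (real \<Rightarrow> real) \<Rightarrow> real \<Rightarrow> real"
    and cc :: "nat \<Rightarrow> (real \<Rightarrow> real) \<Rightarrow> nat \<Rightarrow> int"
  assumes Leq: "\<And>n f. L n f = (\<lambda>x. \<Sum>k\<le>n. real_of_int (cc n f k) * x ^ k * (1 - x) ^ (n - k))"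
    and approx: "\<And>n f k. \<bar>f (real k / real n) * real (n choose k) - real_of_int (cc n f k)\<bar> \<le> 1"
    and ends: "\<And>n f. n \<ge> 1 \<Longrightarrow> f \<in> classX \<Longrightarrow>
                 real_of_int (cc n f 0) = f 0 \<and> real_of_int (cc n f n) = f 1"
  shows "unif_asympt_pres_convexity L classX {0..1}"
proof -
  have P1: "\<forall>n\<ge>1. \<forall>f\<in>classX. L n f \<in> classX"
  proof (intro allI impI ballI)
    fix n :: nat and f assume "1 \<le> n" "f \<in> classX"
    then show "L n f \<in> classX" unfolding Leq using ends by (intro int_sum_X) auto
  qed
  have P2: "\<forall>f\<in>classX. convex_on {0..1} f \<longrightarrow> (\<forall>n\<ge>6. convex_on {0..1} (\<lambda>x. L n f x + Bern n (dd n) x))"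
  proof (intro allI impI ballI)
    fix f and n :: nat assume f: "f \<in> classX" "convex_on {0..1} f" and n: "6 \<le> n"
    have e: "\<And>k. k \<le> n \<Longrightarrow> \<bar>f (real k / real n) - real_of_int (cc n f k) / real (n choose k)\<bar> \<le> FF n k"
      using ends[of n f] f n by (intro coeff_ok approx) auto
    have "convex_on {0..1} (\<lambda>x. Bern n (\<lambda>k. real_of_int (cc n f k) / real (n choose k)) x + Bern n (dd n) x)"
      by (rule main_convex[OF n f(2) e])
    then show "convex_on {0..1} (\<lambda>x. L n f x + Bern n (dd n) x)"
      unfolding Leq int_sum_Bern .
  qed
  have P3: "\<forall>f\<in>classX. concave_on {0..1} f \<longrightarrow> (\<forall>n\<ge>6. concave_on {0..1} (\<lambda>x. L n f x + - Bern n (dd n) x))"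
  proof (intro allI impI ballI)
    fix f and n :: nat assume f: "f \<in> classX" "concave_on {0..1} f" and n: "6 \<le> n"
    have e: "\<And>k. k \<le> n \<Longrightarrow> \<bar>f (real k / real n) - real_of_int (cc n f k) / real (n choose k)\<bar> \<le> FF n k"
      using ends[of n f] f n by (intro coeff_ok approx) auto
    have "concave_on {0..1} (\<lambda>x. Bern n (\<lambda>k. real_of_int (cc n f k) / real (n choose k)) x + - Bern n (dd n) x)"
      by (rule main_concave[OF n f(2) e])
    then show "concave_on {0..1} (\<lambda>x. L n f x + - Bern n (dd n) x)"
      unfolding Leq int_sum_Bern .
  qed
  show ?thesis
    unfolding unif_asympt_pres_convexity_def
    apply (rule conjI[OF P1])
    apply (rule exI[of _ 6])
    apply (rule conjI, simp)
    apply (rule exI[of _ "\<lambda>n x. Bern n (dd n) x"])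
    apply (rule exI[of _ "\<lambda>n x. - Bern n (dd n) x"])
    using eps_unif eta_unif P2 P3 by blast
qed

theorem theorem1p6:
  shows "unif_asympt_pres_convexity Btilde classX {0..1} \<and>
         (\<forall>rnd. nearest_int_choice rnd \<longrightarrow>
            unif_asympt_pres_convexity (Bhat rnd) classX {0..1})"
proof (intro conjI allI impI)
  show "unif_asympt_pres_convexity Btilde classX {0..1}"
  proof (rule generic[where cc = "\<lambda>n f k. \<lfloor>f (real k / real n) * real (n choose k)\<rfloor>"])
    show "\<And>n f. Btilde n f = (\<lambda>x. \<Sum>k\<le>n. real_of_int \<lfloor>f (real k / real n) * real (n choose k)\<rfloor> * x ^ k * (1 - x) ^ (n - k))"
      by (simp add: Btilde_def[abs_def])
    show "\<And>n f k. \<bar>f (real k / real n) * real (n choose k) - real_of_int \<lfloor>f (real k / real n) * real (n choose k)\<rfloor>\<bar> \<le> 1"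
      by (simp add: abs_le_iff) linarith
    fix n :: nat and f :: "real \<Rightarrow> real" assume n: "n \<ge> 1" and X: "f \<in> classX"
    then have "f 0 \<in> \<int>" "f 1 \<in> \<int>" by (auto simp: classX_def)
    then obtain a b where a: "f 0 = real_of_int a" and b: "f 1 = real_of_int b" by (auto elim!: Ints_cases)
    have nn: "real n / real n = 1" using n by simp
    show "real_of_int \<lfloor>f (real 0 / real n) * real (n choose 0)\<rfloor> = f 0 \<and>
          real_of_int \<lfloor>f (real n / real n) * real (n choose n)\<rfloor> = f 1"
      using a b nn by simp
  qed
next
  fix rnd assume rnd: "nearest_int_choice rnd"
  have near: "\<And>n k a m. \<bar>a - real_of_int (rnd n k a)\<bar> \<le> \<bar>a - real_of_int m\<bar>"
    using rnd unfolding nearest_int_choice_def by blast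
  show "unif_asympt_pres_convexity (Bhat rnd) classX {0..1}"
  proof (rule generic[where cc = "\<lambda>n f k. rnd n k (f (real k / real n) * real (n choose k))"])
    show "\<And>n f. Bhat rnd n f = (\<lambda>x. \<Sum>k\<le>n. real_of_int (rnd n k (f (real k / real n) * real (n choose k))) * x ^ k * (1 - x) ^ (n - k))"
      by (simp add: Bhat_def[abs_def])
    fix n k :: nat and f :: "real \<Rightarrow> real"
    let ?a = "f (real k / real n) * real (n choose k)"
    have "\<bar>?a - real_of_int (rnd n k ?a)\<bar> \<le> \<bar>?a - real_of_int \<lfloor>?a\<rfloor>\<bar>" by (rule near)
    also have "\<dots> \<le> 1" by (simp add: abs_le_iff) linarith
    finally show "\<bar>?a - real_of_int (rnd n k ?a)\<bar> \<le> 1" .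
  next
    fix n :: nat and f :: "real \<Rightarrow> real" assume n: "n \<ge> 1" and X: "f \<in> classX"
    then have "f 0 \<in> \<int>" "f 1 \<in> \<int>" by (auto simp: classX_def)
    then obtain a b where a: "f 0 = real_of_int a" and b: "f 1 = real_of_int b" by (auto elim!: Ints_cases)
    have nn: "real n / real n = 1" using n by simp
    have r0: "real_of_int (rnd n 0 (f 0)) = f 0"
      using near[of "f 0" n 0 a] a by simp
    have r1: "real_of_int (rnd n n (f 1)) = f 1"
      using near[of "f 1" n n b] b by simp
    show "real_of_int (rnd n 0 (f (real 0 / real n) * real (n choose 0))) = f 0 \<and>
          real_of_int (rnd n n (f (real n / real n) * real (n choose n))) = f 1"
      using r0 r1 nn by simp
  qed
qed

end
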